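(* Let $G$ be a group and $s,t\in G$ with $s\neq t$. Then $\Phi(\langle s,t\rangle,\{s,t\})$ is complete bipartite (every vertex of $V_s$ is adjacent to every vertex of $V_t$) if and only if for every $x\in\langle s,t\rangle$ there exist $m,n\in\mathbb{Z}$ with $x=s^mt^n$.
   Context: For a group $K$ and $s\ne t$ in $K$, $\Phi(K,\{s,t\})$ is the multigraph with vertex set $V_s\cup V_t$, where $V_s=\{\langle s\rangle x : x\in K\}$ and $V_t=\{\langle t\rangle y: y\in K\}$ are the sets of right cosets, and with one edge labeled $g$ between $\langle s\rangle x$ and $\langle t\rangle y$ for each $g\in\langle s\rangle x\cap\langle t\rangle y$, and no other edges. *)

theory Defs
  imports "HOL-Algebra.Algebra"
begin

text \<open>The multigraph Phi(K,{s,t}): vertices are right cosets of the cyclic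
subgroups generated by s and t inside K; one edge labelled g between
A in V_s and B in V_t for each g in the intersection of A and B.\<close>

definition Phi_Vs :: "('a, 'b) monoid_scheme \<Rightarrow> 'a set \<Rightarrow> 'a \<Rightarrow> 'a set set" where
  "Phi_Vs G K s = {generate G {s} #>\<^bsub>G\<^esub> x | x. x \<in> K}"

definition Phi_edges :: "('a, 'b) monoid_scheme \<Rightarrow> 'a set \<Rightarrow> 'a \<Rightarrow> 'a \<Rightarrow> ('a set \<times> 'a set \<times> 'a) set" where
  "Phi_edges G K s t = {(A, B, g). A \<in> Phi_Vs G K s \<and> B \<in> Phi_Vs G K t \<and> g \<in> A \<inter> B}"

definition Phi_complete_bipartite :: "('a, 'b) monoid_scheme \<Rightarrow> 'a set \<Rightarrow> 'a \<Rightarrow> 'a \<Rightarrow> bool" where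
  "Phi_complete_bipartite G K s t \<longleftrightarrow>
     (\<forall>A \<in> Phi_Vs G K s. \<forall>B \<in> Phi_Vs G K t. \<exists>g. (A, B, g) \<in> Phi_edges G K s t)"

end

theory Submission
  imports Defs
begin

lemma rcos_pow:
  assumes "group G" "a \<in> carrier G"
  shows "generate G {a} #>\<^bsub>G\<^esub> x = {a [^]\<^bsub>G\<^esub> (k::int) \<otimes>\<^bsub>G\<^esub> x | k. True}"
  using group.generate_pow[OF assms] unfolding r_coset_def by auto

theorem proposition4:
  fixes G (structure) and s t :: 'a
  assumes "group G" and "s \<in> carrier G" and "t \<in> carrier G" and "s \<noteq> t"
  shows "Phi_complete_bipartite G (generate G {s, t}) s t \<longleftrightarrow>
         (\<forall>x \<in> generate G {s, t}. \<exists>(m::int) (n::int). x = s [^] m \<otimes> t [^] n)"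
proof -
  interpret group G by fact
  have st: "{s,t} \<subseteq> carrier G" using assms by auto
  have Hc: "generate G {s,t} \<subseteq> carrier G" using generate_incl[OF st] .
  have sub: "subgroup (generate G {s,t}) G" using generate_is_subgroup[OF st] .
  note rs = rcos_pow[OF assms(1) assms(2)] and rt = rcos_pow[OF assms(1) assms(3)]
  show ?thesis
  proof
    assume C: "Phi_complete_bipartite G (generate G {s, t}) s t"
    show "\<forall>x \<in> generate G {s, t}. \<exists>(m::int) (n::int). x = s [^] m \<otimes> t [^] n"
    proof
      fix h assume h: "h \<in> generate G {s,t}"
      have hc: "h \<in> carrier G" using h Hc by auto
      have A: "generate G {s} #> h \<in> Phi_Vs G (generate G {s,t}) s"
        unfolding Phi_Vs_def using h by auto
      have B: "generate G {t} #> \<one> \<in> Phi_Vs G (generate G {s,t}) t"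
        unfolding Phi_Vs_def using subgroup.one_closed[OF sub] by auto
      from C A B obtain g where "g \<in> (generate G {s} #> h) \<inter> (generate G {t} #> \<one>)"
        unfolding Phi_complete_bipartite_def Phi_edges_def by blast
      then obtain a b :: int where e: "s [^] a \<otimes> h = t [^] b \<otimes> \<one>"
        unfolding rs rt by auto
      have "h = inv (s [^] a) \<otimes> (s [^] a \<otimes> h)"
        using hc assms(2) by (simp add: m_assoc[symmetric])
      also have "\<dots> = s [^] (-a) \<otimes> t [^] b" using e assms by (simp add: int_pow_neg)
      finally show "\<exists>(m::int) (n::int). h = s [^] m \<otimes> t [^] n" by blast
    qed
  next
    assume R: "\<forall>x \<in> generate G {s, t}. \<exists>(m::int) (n::int). x = s [^] m \<otimes> t [^] n"
    show "Phi_complete_bipartite G (generate G {s, t}) s t"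
      unfolding Phi_complete_bipartite_def Phi_edges_def
    proof (intro ballI)
      fix A B assume A: "A \<in> Phi_Vs G (generate G {s, t}) s" and B: "B \<in> Phi_Vs G (generate G {s, t}) t"
      from A obtain x where x: "x \<in> generate G {s,t}" "A = generate G {s} #> x"
        unfolding Phi_Vs_def by auto
      from B obtain y where y: "y \<in> generate G {s,t}" "B = generate G {t} #> y"
        unfolding Phi_Vs_def by auto
      have xc: "x \<in> carrier G" and yc: "y \<in> carrier G" using x y Hc by auto
      have "x \<otimes> inv y \<in> generate G {s,t}"
        using x y sub by (simp add: subgroup.m_closed subgroup.m_inv_closed)
      then obtain m n :: int where mn: "x \<otimes> inv y = s [^] m \<otimes> t [^] n" using R by blast
      have xe: "x = s [^] m \<otimes> t [^] n \<otimes> y"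
        using mn xc yc by (metis inv_solve_right m_closed int_pow_closed assms(2,3))
      have "s [^] (-m) \<otimes> x = t [^] n \<otimes> y"
        unfolding xe using assms yc
        by (simp add: int_pow_neg m_assoc[symmetric])
      hence "s [^] (-m) \<otimes> x \<in> A \<inter> B" unfolding x(2) y(2) rs rt by blast
      thus "\<exists>g. (A, B, g) \<in> {(A, B, g). A \<in> Phi_Vs G (generate G {s, t}) s \<and> B \<in> Phi_Vs G (generate G {s, t}) t \<and> g \<in> A \<inter> B}"
        using A B by blast
    qed
  qed
qed

end
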